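(* Assume the setting described in the context (hypotheses on $f,v,\eta$, the mesh condition $h<1/C$ and the CFL condition). If $\rho^o_j \geq 0$ for all $j\in\mathbb{Z}$, then the approximate solution constructed by the scheme satisfies $\rho^n_j \geq 0$ for all $j\in\mathbb{Z}$ and all $n\in\mathbb{N}$.
   Context: Let $C>0$ and let $f\in C^2(\mathbb{R}^+\times\mathbb{R}\times\mathbb{R};\mathbb{R})$ satisfy $\sup_{t,x,\rho}|\partial_\rho f(t,x,\rho)|<+\infty$, $\sup_{t,x}|\partial_x f(t,x,\rho)|< C|\rho|$ and $\sup_{t,x}|\partial^2_{xx} f(t,x,\rho)|< C|\rho|$ for all $\rho$, and $f(t,x,0)=0$ for all $t,x$. Let $v\in (C^2\cap W^{1,\infty})(\mathbb{R};\mathbb{R})$ and $\eta\in (C^2\cap W^{2,\infty})(\mathbb{R};\mathbb{R})$. These are the data of the nonlocal conservation law $\partial_t\rho+\partial_x\big(f(t,x,\rho)\,v(\rho*\eta)\big)=0$, $\rho(0,x)=\rho^o(x)$, with $\rho^o\in L^\infty(\mathbb{R})$. Numerical scheme: fix a space step $h>0$ and time step $\tau>0$, set $\lambda=\tau/h$, $x_j=jh$, $x_{j+1/2}=(j+\tfrac12)h$, $t^n=n\tau$. Assume $h<1/C$ and the CFL condition $\lambda\,(1+2\|\partial_\rho f\|_{L^\infty})\|v\|_{L^\infty}\le 1/6$. Set $\rho^o_j=\frac1h\int_{x_{j-1/2}}^{x_{j+1/2}}\rho^o(x)\,dx$ and $\rho^{n+1}_j=\rho^n_j-\lambda\big(\mathbf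 f^n_{j+1/2}(\rho^n_j,\rho^n_{j+1})-\mathbf f^n_{j-1/2}(\rho^n_{j-1},\rho^n_j)\big)$, where $\mathbf f^n_{j+1/2}(\rho_1,\rho_2)=\frac{f(t^n,x_{j+1/2},\rho_1)+f(t^n,x_{j+1/2},\rho_2)}{2}\,v(c^n_{j+1/2})-\frac{1}{6\lambda}(\rho_2-\rho_1)$, $c^n_{j+1/2}=\sum_{k\in\mathbb{Z}} h\,\rho^n_{k+1/2}\,\eta_{j+1/2-k}$, with $\rho^n_{k+1/2}$ a convex combination of $\rho^n_k$ and $\rho^n_{k+1}$, and $\eta_{m+1/2}=\frac1h\int_{x_m}^{x_{m+1}}\eta(x)\,dx$ for $m\in\mathbb{Z}$. *)

theory Defs
  imports "HOL-Analysis.Analysis"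
begin

definition C2_on :: "'a::euclidean_space set \<Rightarrow> ('a \<Rightarrow> real) \<Rightarrow> bool" where
  "C2_on S g \<longleftrightarrow>
     (\<exists>(D :: 'a \<Rightarrow> ('a \<Rightarrow>\<^sub>L real)) (D2 :: 'a \<Rightarrow> ('a \<Rightarrow>\<^sub>L ('a \<Rightarrow>\<^sub>L real))).
        (\<forall>p\<in>S. (g has_derivative blinfun_apply (D p)) (at p within S)) \<and>
        (\<forall>p\<in>S. (D has_derivative blinfun_apply (D2 p)) (at p within S)) \<and>
        continuous_on S D2)"

definition eta_half :: "real \<Rightarrow> (real \<Rightarrow> real) \<Rightarrow> int \<Rightarrow> real" where
  "eta_half h \<eta> m = (1 / h) * integral {real_of_int m * h .. (real_of_int m + 1) * h} \<eta>"

definition init_avg :: "real \<Rightarrow> (real \<Rightarrow> real) \<Rightarrow> int \<Rightarrow> real" where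
  "init_avg h \<rho>o j = (1 / h) * (LINT x : {(real_of_int j - 1/2) * h .. (real_of_int j + 1/2) * h} | lborel. \<rho>o x)"

text \<open>Discrete convolution c^n_{j+1/2} = sum_k h * rho_{k+1/2} * eta_{j+1/2-k}, where
  rho_{k+1/2} = th k * rho_k + (1 - th k) * rho_{k+1} (a convex combination, 0 <= th k <= 1).\<close>
definition conv_c :: "real \<Rightarrow> (real \<Rightarrow> real) \<Rightarrow> (int \<Rightarrow> real) \<Rightarrow> (int \<Rightarrow> real) \<Rightarrow> int \<Rightarrow> real" where
  "conv_c h \<eta> th r j =
     (\<Sum>\<^sub>\<infinity>k\<in>(UNIV::int set). h * (th k * r k + (1 - th k) * r (k + 1)) * eta_half h \<eta> (j - k))"

definition num_flux :: "(real \<Rightarrow> real \<Rightarrow> real \<Rightarrow> real) \<Rightarrow> (real \<Rightarrow> real) \<Rightarrow> real \<Rightarrow>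
    real \<Rightarrow> real \<Rightarrow> real \<Rightarrow> real \<Rightarrow> real \<Rightarrow> real" where
  "num_flux f v lam t x c r1 r2 = (f t x r1 + f t x r2) / 2 * v c - (r2 - r1) / (6 * lam)"

end

theory Submission
  imports Defs
begin

lemma f_diff:
  assumes "C2_on ({0..} \<times> UNIV) (\<lambda>(t, x, r). f t x r)" "0 \<le> (t::real)"
  shows "(\<lambda>s. f t x s) differentiable (at (r::real))"
proof -
  obtain D where
    D: "\<forall>p\<in>{0..} \<times> UNIV. ((\<lambda>(t, x, r). f t x r) has_derivative blinfun_apply (D p)) (at p within {0..} \<times> UNIV)"
    using assms(1) unfolding C2_on_def by blast
  have L: "((\<lambda>s. (t,x,s)) has_derivative (\<lambda>d. (0,0,d))) (at r within UNIV)"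
    by (auto intro!: derivative_eq_intros)
  have "((\<lambda>s. (\<lambda>(t, x, r). f t x r) (t,x,s)) has_derivative (\<lambda>y. blinfun_apply (D (t,x,r)) (0,0,y))) (at r within UNIV)"
    apply (rule has_derivative_in_compose2[where g'="\<lambda>p. blinfun_apply (D p)" and t="{0..} \<times> UNIV", OF _ _ _ L])
    using D assms(2) by auto
  then show ?thesis unfolding differentiable_def by auto
qed

lemma f_lip:
  assumes "C2_on ({0..} \<times> UNIV) (\<lambda>(t, x, r). f t x r)" "0 \<le> (t::real)"
    and z: "f t x 0 = 0" and b: "\<And>s. \<bar>deriv (\<lambda>s. f t x s) s\<bar> \<le> L"
  shows "\<bar>f t x r\<bar> \<le> L * \<bar>r\<bar>"
proof -
  have der: "\<And>s. DERIV (\<lambda>s. f t x s) s :> deriv (\<lambda>s. f t x s) s"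
    using f_diff[OF assms(1,2)] DERIV_deriv_iff_real_differentiable by blast
  consider "r = 0" | "r > 0" | "r < 0" by linarith
  then show ?thesis
  proof cases
    case 1 then show ?thesis using z by simp
  next
    case 2
    then obtain z where "f t x r - f t x 0 = (r - 0) * deriv (\<lambda>s. f t x s) z"
      using MVT2[of 0 r "\<lambda>s. f t x s", OF _ der] by blast
    then have "\<bar>f t x r\<bar> = \<bar>r\<bar> * \<bar>deriv (\<lambda>s. f t x s) z\<bar>" using z by (simp add: abs_mult)
    also have "\<dots> \<le> \<bar>r\<bar> * L" using b by (simp add: mult_left_mono)
    finally show ?thesis by (simp add: mult.commute)
  next
    case 3
    then obtain z where "f t x 0 - f t x r = (0 - r) * deriv (\<lambda>s. f t x s) z"
      using MVT2[of r 0 "\<lambda>s. f t x s", OF _ der] by blast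
    then have "\<bar>f t x r\<bar> = \<bar>r\<bar> * \<bar>deriv (\<lambda>s. f t x s) z\<bar>" using z by (simp add: abs_mult)
    also have "\<dots> \<le> \<bar>r\<bar> * L" using b by (simp add: mult_left_mono)
    finally show ?thesis by (simp add: mult.commute)
  qed
qed


theorem lemma2p2:
  fixes f :: "real \<Rightarrow> real \<Rightarrow> real \<Rightarrow> real"
    and v \<eta> \<rho>o :: "real \<Rightarrow> real"
    and C h \<tau> :: real
    and th :: "nat \<Rightarrow> int \<Rightarrow> real"
    and \<rho> :: "nat \<Rightarrow> int \<Rightarrow> real"
  assumes C_pos: "C > 0"
    and f_C2: "C2_on ({0..} \<times> UNIV) (\<lambda>(t, x, r). f t x r)"
    and f_rho_bdd: "\<exists>M. \<forall>t x r. 0 \<le> t \<longrightarrow> \<bar>deriv (\<lambda>s. f t x s) r\<bar> \<le> M"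
    and f_x_bdd: "\<forall>t x r. 0 \<le> t \<longrightarrow> \<bar>deriv (\<lambda>y. f t y r) x\<bar> \<le> C * \<bar>r\<bar>"
    and f_xx_bdd: "\<forall>t x r. 0 \<le> t \<longrightarrow> \<bar>deriv (\<lambda>y. deriv (\<lambda>z. f t z r) y) x\<bar> \<le> C * \<bar>r\<bar>"
    and f_zero: "\<forall>t x. 0 \<le> t \<longrightarrow> f t x 0 = 0"
    and v_C2: "C2_on UNIV v"
    and v_W1inf: "bounded (range v)" "bounded (range (deriv v))"
    and eta_C2: "C2_on UNIV \<eta>"
    and eta_W2inf: "bounded (range \<eta>)" "bounded (range (deriv \<eta>))"
                   "bounded (range (deriv (deriv \<eta>)))"
    and rho0_Linf: "\<rho>o \<in> borel_measurable lborel" "\<exists>M. AE x in lborel. \<bar>\<rho>o x\<bar> \<le> M"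
    and h_pos: "h > 0" and tau_pos: "\<tau> > 0"
    and mesh: "h < 1 / C"
    and CFL: "(\<tau> / h) * (1 + 2 * (SUP p \<in> {p :: real \<times> real \<times> real. 0 \<le> fst p}.
                   \<bar>deriv (\<lambda>s. f (fst p) (fst (snd p)) s) (snd (snd p))\<bar>))
                * (SUP y. \<bar>v y\<bar>) \<le> 1 / 6"
    and th_convex: "\<forall>n k. 0 \<le> th n k \<and> th n k \<le> 1"
    and init: "\<forall>j. \<rho> 0 j = init_avg h \<rho>o j"
    and step: "\<forall>n j. \<rho> (Suc n) j = \<rho> n j - (\<tau> / h) *
        (num_flux f v (\<tau> / h) (real n * \<tau>) ((real_of_int j + 1/2) * h)
            (conv_c h \<eta> (th n) (\<rho> n) j) (\<rho> n j) (\<rho> n (j + 1))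
       - num_flux f v (\<tau> / h) (real n * \<tau>) ((real_of_int j - 1/2) * h)
            (conv_c h \<eta> (th n) (\<rho> n) (j - 1)) (\<rho> n (j - 1)) (\<rho> n j))"
    and init_nonneg: "\<forall>j. init_avg h \<rho>o j \<ge> 0"
  shows "\<forall>n j. \<rho> n j \<ge> 0"
proof -
  define lam where "lam = \<tau> / h"
  define S where "S = {p :: real \<times> real \<times> real. 0 \<le> fst p}"
  define g where "g = (\<lambda>p::real\<times>real\<times>real. \<bar>deriv (\<lambda>s. f (fst p) (fst (snd p)) s) (snd (snd p))\<bar>)"
  define L where "L = (SUP p \<in> S. g p)"
  define V where "V = (SUP y. \<bar>v y\<bar>)"
  have lam_pos: "lam > 0" using h_pos tau_pos lam_def by simp
  obtain M where M: "\<forall>t x r. 0 \<le> t \<longrightarrow> \<bar>deriv (\<lambda>s. f t x s) r\<bar> \<le> M" using f_rho_bdd by blast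
  have bddL: "bdd_above (g ` S)" unfolding bdd_above_def using M by (auto simp: S_def g_def)
  have Lb: "\<And>t x r. 0 \<le> t \<Longrightarrow> \<bar>deriv (\<lambda>s. f t x s) r\<bar> \<le> L"
  proof -
    fix t x r :: real assume "0 \<le> t"
    then have "(t,x,r) \<in> S" by (simp add: S_def)
    from cSUP_upper[OF this bddL] show "\<bar>deriv (\<lambda>s. f t x s) r\<bar> \<le> L" by (simp add: L_def g_def)
  qed
  have L0: "L \<ge> 0" using Lb[of 0 0 0] by linarith
  have bddV: "bdd_above (range (\<lambda>y. \<bar>v y\<bar>))"
    using v_W1inf(1) unfolding bounded_iff bdd_above_def by (auto simp: real_norm_def)
  have Vb: "\<And>y. \<bar>v y\<bar> \<le> V" unfolding V_def by (rule cSUP_upper[OF _ bddV]) simp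
  have V0: "V \<ge> 0" using Vb[of 0] by linarith
  have fb: "\<And>t x r. 0 \<le> t \<Longrightarrow> \<bar>f t x r\<bar> \<le> L * \<bar>r\<bar>"
    using f_lip[OF f_C2 _ _ Lb] f_zero by blast
  define K where "K = lam * L * V"
  have K0: "K \<ge> 0" using K_def lam_pos L0 V0 by simp
  have cfl: "lam * (1 + 2 * L) * V \<le> 1/6" using CFL by (simp add: lam_def L_def S_def g_def V_def)
  have "lam * V \<ge> 0" using lam_pos V0 by simp
  then have K12: "K \<le> 1/12" using cfl by (simp add: K_def algebra_simps)
  have key: "\<And>t x r w. 0 \<le> t \<Longrightarrow> 0 \<le> r \<Longrightarrow> \<bar>lam * (f t x r * v w)\<bar> \<le> K * r"
  proof -
    fix t x r w :: real assume t: "0 \<le> t" and r: "0 \<le> r"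
    have "\<bar>f t x r * v w\<bar> \<le> (L * r) * V"
      unfolding abs_mult using fb[OF t, of x r] Vb[of w] r L0
      by (intro mult_mono) auto
    then have "lam * \<bar>f t x r * v w\<bar> \<le> lam * ((L * r) * V)"
      using lam_pos by (intro mult_left_mono) auto
    then show "\<bar>lam * (f t x r * v w)\<bar> \<le> K * r"
      using lam_pos by (simp add: abs_mult K_def algebra_simps)
  qed
  show ?thesis
  proof (rule allI)
    fix n
    show "\<forall>j. \<rho> n j \<ge> 0"
    proof (induction n)
      case 0 then show ?case using init init_nonneg by simp
    next
      case (Suc n)
      show ?case
      proof
        fix j
        define a where "a = \<rho> n (j - 1)"
        define b where "b = \<rho> n j"
        define c where "c = \<rho> n (j + 1)"
        define t where "t = real n * \<tau>"
        define xp where "xp = (real_of_int j + 1/2) * h"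
        define xm where "xm = (real_of_int j - 1/2) * h"
        define vp where "vp = conv_c h \<eta> (th n) (\<rho> n) j"
        define vm where "vm = conv_c h \<eta> (th n) (\<rho> n) (j - 1)"
        have t0: "0 \<le> t" using tau_pos t_def by simp
        have a0: "a \<ge> 0" and b0: "b \<ge> 0" and c0: "c \<ge> 0" using Suc a_def b_def c_def by auto
        have e: "\<rho> (Suc n) j = 2/3*b + c/6 + a/6 - (lam * (f t xp b * v vp) + lam * (f t xp c * v vp)
             - lam * (f t xm a * v vm) - lam * (f t xm b * v vm)) / 2"
        proof -
          have s: "\<rho> (Suc n) j = b - lam * ((f t xp b + f t xp c)/2 * v vp - (c-b)/(6*lam)
               - ((f t xm a + f t xm b)/2 * v vm - (b-a)/(6*lam)))"
            using step unfolding num_flux_def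
            by (simp add: a_def b_def c_def t_def xp_def xm_def vp_def vm_def lam_def)
          show ?thesis unfolding s using lam_pos by (simp add: field_simps)
        qed
        have k1: "\<bar>lam * (f t xp b * v vp)\<bar> \<le> K * b" using key[OF t0 b0] .
        have k2: "\<bar>lam * (f t xp c * v vp)\<bar> \<le> K * c" using key[OF t0 c0] .
        have k3: "\<bar>lam * (f t xm a * v vm)\<bar> \<le> K * a" using key[OF t0 a0] .
        have k4: "\<bar>lam * (f t xm b * v vm)\<bar> \<le> K * b" using key[OF t0 b0] .
        have "K * a \<le> a/12" "K * b \<le> b/12" "K * c \<le> c/12"
          using mult_right_mono[OF K12] a0 b0 c0 by auto
        moreover have "\<And>p1 p2 p3 p4 :: real. \<bar>p1\<bar> \<le> K*b \<Longrightarrow> \<bar>p2\<bar> \<le> K*c \<Longrightarrow> \<bar>p3\<bar> \<le> K*a \<Longrightarrow> \<bar>p4\<bar> \<le> K*b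
            \<Longrightarrow> K * a \<le> a/12 \<Longrightarrow> K * b \<le> b/12 \<Longrightarrow> K * c \<le> c/12 \<Longrightarrow>
            0 \<le> 2/3*b + c/6 + a/6 - (p1 + p2 - p3 - p4) / 2"
          using a0 b0 c0 by (simp add: abs_le_iff)
        ultimately have "0 \<le> 2/3*b + c/6 + a/6 - (lam * (f t xp b * v vp) + lam * (f t xp c * v vp)
             - lam * (f t xm a * v vm) - lam * (f t xm b * v vm)) / 2" using k1 k2 k3 k4 by blast
        then show "0 \<le> \<rho> (Suc n) j" by (simp only: e)
      qed
    qed
  qed
qed

end
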